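(* Let $\mathcal H$ be an infinite-dimensional separable Hilbert space with orthonormal basis $\{|\varphi_i\rangle\}_{i=1}^\infty$, and let $\big[\langle\varphi_i|\hat\varrho|\varphi_j\rangle\big]_{i,j=1}^{\infty}$ be an infinite complex matrix. This matrix represents a quantum state (i.e. is the matrix of a density operator in this basis) if and only if: (i) $\sum_{i,j=1}^{\infty}|\langle\varphi_i|\hat\varrho|\varphi_j\rangle|^2\le 1$; (ii) $\langle\varphi_i|\hat\varrho|\varphi_j\rangle=\overline{\langle\varphi_j|\hat\varrho|\varphi_i\rangle}$ for all $1\le i,j<\infty$; (iii) \[\lim_{n\to\infty}\sum_{k=0}^{n}(-1)^k\binom{n}{k}\sum_{i=1}^{\infty}\langle\varphi_i|\hat\varrho^{k+1}|\varphi_i\rangle=0;\] (iv) $\sum_{i=1}^{\infty}\langle\varphi_i|\hat\varrho|\varphi_i\rangle=1$.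
   Context: A density operator on $\mathcal H$ is an operator $\hat\varrho:\mathcal H\to\mathcal H$ defined on all of $\mathcal H$ which is positive, self-adjoint, and has trace $1$. When condition (i) holds, the matrix defines a unique Hilbert–Schmidt operator $\hat\varrho$ on $\mathcal H$ with the given matrix elements; powers refer to this operator. *)

theory Defs
  imports "HOL-Analysis.Analysis"
begin

text \<open>Concrete model of an infinite-dimensional separable Hilbert space: the space
  l2 of square-summable complex sequences indexed by nat, with orthonormal basis
  the standard unit vectors (basis vector i corresponds to the paper's phi_(i+1)).\<close>

definition l2 :: "(nat \<Rightarrow> complex) set" where
  "l2 = {x. summable (\<lambda>i. (cmod (x i))^2)}"

definition cinner :: "(nat \<Rightarrow> complex) \<Rightarrow> (nat \<Rightarrow> complex) \<Rightarrow> complex" where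
  "cinner x y = (\<Sum>i. cnj (x i) * y i)"

definition basis_vec :: "nat \<Rightarrow> nat \<Rightarrow> complex" where
  "basis_vec i = (\<lambda>j. if j = i then 1 else 0)"

definition density_operator :: "((nat \<Rightarrow> complex) \<Rightarrow> (nat \<Rightarrow> complex)) \<Rightarrow> bool" where
  "density_operator T \<longleftrightarrow>
     (\<forall>x\<in>l2. T x \<in> l2) \<and>
     (\<forall>x\<in>l2. \<forall>y\<in>l2. \<forall>a b. T (\<lambda>i. a * x i + b * y i) = (\<lambda>i. a * T x i + b * T y i)) \<and>
     (\<forall>x\<in>l2. \<forall>y\<in>l2. cinner x (T y) = cinner (T x) y) \<and>
     (\<forall>x\<in>l2. 0 \<le> Re (cinner x (T x))) \<and>
     ((\<lambda>i. cinner (basis_vec i) (T (basis_vec i))) sums 1)"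

definition represents_state :: "(nat \<Rightarrow> nat \<Rightarrow> complex) \<Rightarrow> bool" where
  "represents_state M \<longleftrightarrow>
     (\<exists>T. density_operator T \<and>
          (\<forall>i j. cinner (basis_vec i) (T (basis_vec j)) = M i j))"

definition mat_op :: "(nat \<Rightarrow> nat \<Rightarrow> complex) \<Rightarrow> (nat \<Rightarrow> complex) \<Rightarrow> (nat \<Rightarrow> complex)" where
  "mat_op M x = (\<lambda>i. \<Sum>j. M i j * x j)"

end

theory Submission
  imports Defs
begin
definition nrm2 :: "(nat \<Rightarrow> complex) \<Rightarrow> real" where
  "nrm2 x = (\<Sum>i. (cmod (x i))^2)"

lemma l2_D: "x \<in> l2 \<Longrightarrow> summable (\<lambda>i. (cmod (x i))^2)"
  by (simp add: l2_def)

lemma l2_lin: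
  assumes "x \<in> l2" "y \<in> l2"
  shows "(\<lambda>i. a * x i + b * y i) \<in> l2"
proof -
  have S: "summable (\<lambda>i. 2 * (cmod a)^2 * (cmod (x i))^2 + 2 * (cmod b)^2 * (cmod (y i))^2)"
    using assms by (intro summable_add summable_mult) (auto simp: l2_def)
  have B: "norm ((cmod (a * x i + b * y i))^2) \<le> 2 * (cmod a)^2 * (cmod (x i))^2 + 2 * (cmod b)^2 * (cmod (y i))^2" for i
  proof -
    have "cmod (a * x i + b * y i) \<le> cmod a * cmod (x i) + cmod b * cmod (y i)"
      by (metis norm_mult norm_triangle_ineq)
    hence "(cmod (a * x i + b * y i))^2 \<le> (cmod a * cmod (x i) + cmod b * cmod (y i))^2"
      by (simp add: power_mono)
    also have "\<dots> \<le> 2 * (cmod a)^2 * (cmod (x i))^2 + 2 * (cmod b)^2 * (cmod (y i))^2"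
    proof -
      have "0 \<le> (cmod a * cmod (x i) - cmod b * cmod (y i))^2" by simp
      thus ?thesis by (simp add: power2_diff power2_sum power_mult_distrib)
    qed
    finally show ?thesis by simp
  qed
  show ?thesis unfolding l2_def mem_Collect_eq by (rule summable_comparison_test'[where N=0, OF S]) (use B in auto)
qed

lemma l2_zero: "(\<lambda>i. 0) \<in> l2" by (simp add: l2_def)

lemma l2_diff: "x \<in> l2 \<Longrightarrow> y \<in> l2 \<Longrightarrow> (\<lambda>i. x i - y i) \<in> l2"
  using l2_lin[of x y 1 "-1"] by simp

lemma l2_add: "x \<in> l2 \<Longrightarrow> y \<in> l2 \<Longrightarrow> (\<lambda>i. x i + y i) \<in> l2"
  using l2_lin[of x y 1 "1"] by simp

lemma l2_scale: "x \<in> l2 \<Longrightarrow> (\<lambda>i. a * x i) \<in> l2"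
  using l2_lin[of x x a 0] by simp

lemma basis_l2: "basis_vec i \<in> l2"
proof -
  have "(\<lambda>j. (cmod (basis_vec i j))^2) = (\<lambda>j. if j = i then 1 else 0)"
    by (auto simp: basis_vec_def)
  thus ?thesis unfolding l2_def using sums_single[of i "\<lambda>_. 1::real"] sums_summable by fastforce
qed

lemma summable_inner_norm:
  assumes "x \<in> l2" "y \<in> l2"
  shows "summable (\<lambda>i. cmod (x i) * cmod (y i))"
proof -
  have S: "summable (\<lambda>i. (cmod (x i))^2 + (cmod (y i))^2)"
    using assms by (intro summable_add) (auto simp: l2_def)
  have B: "norm (cmod (x i) * cmod (y i)) \<le> (cmod (x i))^2 + (cmod (y i))^2" for i
  proof -
    have "0 \<le> (cmod (x i) - cmod (y i))^2" by simp
    hence "2 * (cmod (x i) * cmod (y i)) \<le> (cmod (x i))^2 + (cmod (y i))^2"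
      by (simp add: power2_diff)
    moreover have "0 \<le> cmod (x i) * cmod (y i)" by simp
    ultimately have "cmod (x i) * cmod (y i) \<le> (cmod (x i))^2 + (cmod (y i))^2" by linarith
    thus ?thesis by simp
  qed
  show ?thesis by (rule summable_comparison_test'[where N=0, OF S]) (use B in auto)
qed

lemma summable_inner:
  assumes "x \<in> l2" "y \<in> l2"
  shows "summable (\<lambda>i. cnj (x i) * y i)"
  by (rule summable_norm_cancel) (use summable_inner_norm[OF assms] in \<open>simp add: norm_mult\<close>)

lemma cinner_lin2:
  assumes "x \<in> l2" "y \<in> l2" "z \<in> l2"
  shows "cinner x (\<lambda>i. a * y i + b * z i) = a * cinner x y + b * cinner x z"
proof -
  have "cinner x (\<lambda>i. a * y i + b * z i) = (\<Sum>i. a * (cnj (x i) * y i) + b * (cnj (x i) * z i))"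
    unfolding cinner_def by (simp add: algebra_simps)
  also have "\<dots> = (\<Sum>i. a * (cnj (x i) * y i)) + (\<Sum>i. b * (cnj (x i) * z i))"
    using assms by (intro suminf_add[symmetric] summable_mult summable_inner)
  also have "\<dots> = a * cinner x y + b * cinner x z"
    unfolding cinner_def using assms by (simp add: suminf_mult summable_inner)
  finally show ?thesis .
qed

lemma cinner_sym:
  assumes "x \<in> l2" "y \<in> l2"
  shows "cinner y x = cnj (cinner x y)"
proof -
  have "(\<lambda>i. cnj (x i) * y i) sums cinner x y" unfolding cinner_def
    by (rule summable_sums) (rule summable_inner[OF assms])
  hence "(\<lambda>i. cnj (cnj (x i) * y i)) sums cnj (cinner x y)" by (subst sums_cnj)
  thus ?thesis unfolding cinner_def by (simp add: sums_iff mult.commute)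
qed


lemma cinner_lin1:
  assumes "x \<in> l2" "y \<in> l2" "z \<in> l2"
  shows "cinner (\<lambda>i. a * x i + b * y i) z = cnj a * cinner x z + cnj b * cinner y z"
proof -
  have "cinner (\<lambda>i. a * x i + b * y i) z = cnj (cinner z (\<lambda>i. a * x i + b * y i))"
    using assms by (intro cinner_sym l2_lin)
  also have "\<dots> = cnj (a * cinner z x + b * cinner z y)" using assms by (simp add: cinner_lin2)
  also have "\<dots> = cnj a * cinner x z + cnj b * cinner y z"
    using assms by (simp add: cinner_sym[of x z] cinner_sym[of y z])
  finally show ?thesis .
qed

lemma cinner_diff2:
  assumes "x \<in> l2" "y \<in> l2" "z \<in> l2"
  shows "cinner x (\<lambda>i. y i - z i) = cinner x y - cinner x z"
  using cinner_lin2[OF assms, of 1 "-1"] by simp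

lemma cinner_diff1:
  assumes "x \<in> l2" "y \<in> l2" "z \<in> l2"
  shows "cinner (\<lambda>i. x i - y i) z = cinner x z - cinner y z"
  using cinner_lin1[OF assms, of 1 "-1"] by simp

lemma nrm2_nonneg: "x \<in> l2 \<Longrightarrow> 0 \<le> nrm2 x"
  unfolding nrm2_def by (intro suminf_nonneg) (auto simp: l2_def)

lemma cinner_self: "x \<in> l2 \<Longrightarrow> cinner x x = of_real (nrm2 x)"
proof -
  assume x: "x \<in> l2"
  have "(\<lambda>i. cnj (x i) * x i) = (\<lambda>i. of_real ((cmod (x i))^2))"
  proof (rule ext)
    fix i show "cnj (x i) * x i = of_real ((cmod (x i))^2)"
      using complex_norm_square[of "x i"] by (simp add: mult.commute)
  qed
  thus ?thesis unfolding cinner_def nrm2_def using x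
    by (simp add: suminf_of_real l2_def)
qed

lemma real_cs_sum:
  fixes u v :: "nat \<Rightarrow> real"
  assumes u0: "\<And>i. 0 \<le> u i" and v0: "\<And>i. 0 \<le> v i"
    and su: "summable (\<lambda>i. (u i)^2)" and sv: "summable (\<lambda>i. (v i)^2)"
  shows "summable (\<lambda>i. u i * v i) \<and> (\<Sum>i. u i * v i) \<le> sqrt (\<Sum>i. (u i)^2) * sqrt (\<Sum>i. (v i)^2)"
proof -
  define X where "X = (\<Sum>i. (u i)^2)"
  define Y where "Y = (\<Sum>i. (v i)^2)"
  have sS: "summable (\<lambda>i. u i * v i)"
  proof (rule summable_comparison_test'[where N=0])
    show "summable (\<lambda>i. (u i)^2 + (v i)^2)" using su sv by (rule summable_add)
    fix n
    have "0 \<le> (u n - v n)^2" by simp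
    hence "2 * (u n * v n) \<le> (u n)^2 + (v n)^2" by (simp add: power2_diff)
    moreover have "0 \<le> u n * v n" using u0 v0 by simp
    ultimately show "norm (u n * v n) \<le> (u n)^2 + (v n)^2" by simp
  qed
  define S where "S = (\<Sum>i. u i * v i)"
  have key: "2 * t * S \<le> t^2 * X + Y" if "t > 0" for t
  proof -
    have "\<And>i. 2 * t * (u i * v i) \<le> t^2 * (u i)^2 + (v i)^2"
    proof -
      fix i
      have "0 \<le> (t * u i - v i)^2" by simp
      thus "2 * t * (u i * v i) \<le> t^2 * (u i)^2 + (v i)^2"
        by (simp add: power2_diff power_mult_distrib algebra_simps)
    qed
    hence "(\<Sum>i. 2 * t * (u i * v i)) \<le> (\<Sum>i. t^2 * (u i)^2 + (v i)^2)"
      by (intro suminf_le summable_add summable_mult sS su sv) auto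
    also have "(\<Sum>i. t^2 * (u i)^2 + (v i)^2) = t^2 * X + Y"
      unfolding X_def Y_def by (subst suminf_add[symmetric]) (auto intro: summable_mult su sv simp: suminf_mult[OF su])
    also have "(\<Sum>i. 2 * t * (u i * v i)) = 2 * t * S"
      unfolding S_def by (rule suminf_mult[OF sS])
    finally show ?thesis .
  qed
  have X0: "0 \<le> X" unfolding X_def by (intro suminf_nonneg su) simp
  have Y0: "0 \<le> Y" unfolding Y_def by (intro suminf_nonneg sv) simp
  have S0: "0 \<le> S" unfolding S_def by (intro suminf_nonneg sS) (simp add: u0 v0)
  have "S \<le> sqrt X * sqrt Y"
  proof (cases "X = 0 \<or> Y = 0")
    case True
    have "S \<le> 0"
    proof (rule ccontr)
      assume "\<not> S \<le> 0"
      hence Sp: "S > 0" by simp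
      show False
      proof (cases "X = 0")
        case True
        define t where "t = (Y + 1) / S"
        have tp: "t > 0" using Sp Y0 by (simp add: t_def)
        from key[OF tp] True have "2 * t * S \<le> Y" by simp
        moreover have "t * S = Y + 1" using Sp by (simp add: t_def)
        ultimately show False using Y0 by simp
      next
        case False
        hence Y: "Y = 0" using \<open>X = 0 \<or> Y = 0\<close> by simp
        have Xp: "X > 0" using X0 False by simp
        define t where "t = S / (X + 1)"
        have tp: "t > 0" using Sp X0 by (simp add: t_def)
        from key[OF tp] Y have "2 * t * S \<le> t^2 * X" by simp
        hence "2 * S \<le> t * X" using tp by (simp add: power2_eq_square)
        moreover have "t * X < S" using Sp Xp unfolding t_def by (simp add: field_simps)
        ultimately show False using Sp by simp
      qed
    qed
    moreover have "0 \<le> sqrt X * sqrt Y" using X0 Y0 by simp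
    ultimately show ?thesis by linarith
  next
    case False
    hence Xp: "X > 0" and Yp: "Y > 0" using X0 Y0 by auto
    define t where "t = sqrt Y / sqrt X"
    have tp: "t > 0" using Xp Yp by (simp add: t_def)
    have "t^2 * X = Y" using Xp Yp by (simp add: t_def power_divide)
    with key[OF tp] have "2 * t * S \<le> 2 * Y" by simp
    hence "t * S \<le> Y" by simp
    hence "S \<le> Y / t" using tp by (simp add: field_simps)
    also have "Y / t = sqrt X * sqrt Y" using Xp Yp unfolding t_def
      by (simp add: field_simps)
    finally show ?thesis .
  qed
  thus ?thesis using sS unfolding S_def X_def Y_def by simp
qed

lemma cs:
  assumes "x \<in> l2" "y \<in> l2"
  shows "cmod (cinner x y) \<le> sqrt (nrm2 x) * sqrt (nrm2 y)"
proof -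
  have "cmod (cinner x y) \<le> (\<Sum>i. cmod (cnj (x i) * y i))"
    unfolding cinner_def
    by (rule summable_norm) (use summable_inner_norm[OF assms] in \<open>simp add: norm_mult\<close>)
  also have "\<dots> = (\<Sum>i. cmod (x i) * cmod (y i))" by (simp add: norm_mult)
  also have "\<dots> \<le> sqrt (nrm2 x) * sqrt (nrm2 y)"
    using real_cs_sum[of "\<lambda>i. cmod (x i)" "\<lambda>i. cmod (y i)"] assms
    unfolding nrm2_def l2_def by simp
  finally show ?thesis .
qed

lemma cs2:
  assumes "x \<in> l2" "y \<in> l2"
  shows "(cmod (cinner x y))^2 \<le> nrm2 x * nrm2 y"
proof -
  have "(cmod (cinner x y))^2 \<le> (sqrt (nrm2 x) * sqrt (nrm2 y))^2"
    using cs[OF assms] by (simp add: power_mono)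
  also have "\<dots> = nrm2 x * nrm2 y" using nrm2_nonneg assms by (simp add: power_mult_distrib)
  finally show ?thesis .
qed

lemma cinner_basis_left: "cinner (basis_vec i) x = x i"
proof -
  have "(\<lambda>j. cnj (basis_vec i j) * x j) = (\<lambda>j. if j = i then x j else 0)"
    by (auto simp: basis_vec_def)
  thus ?thesis unfolding cinner_def using sums_single[of i x] by (simp add: sums_iff)
qed

lemma cinner_basis_right: "cinner x (basis_vec i) = cnj (x i)"
proof -
  have "(\<lambda>j. cnj (x j) * basis_vec i j) = (\<lambda>j. if j = i then cnj (x j) else 0)"
    by (auto simp: basis_vec_def)
  thus ?thesis unfolding cinner_def using sums_single[of i "\<lambda>j. cnj (x j)"] by (simp add: sums_iff)
qed

lemma nrm2_basis: "nrm2 (basis_vec i) = 1"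
proof -
  have "cinner (basis_vec i) (basis_vec i) = 1" by (simp add: cinner_basis_left) (simp add: basis_vec_def)
  thus ?thesis using cinner_self[OF basis_l2, of i] by simp
qed

definition sal :: "((nat \<Rightarrow> complex) \<Rightarrow> (nat \<Rightarrow> complex)) \<Rightarrow> bool" where
  "sal T \<longleftrightarrow> (\<forall>x\<in>l2. T x \<in> l2) \<and>
     (\<forall>x\<in>l2. \<forall>y\<in>l2. \<forall>a b. T (\<lambda>i. a * x i + b * y i) = (\<lambda>i. a * T x i + b * T y i)) \<and>
     (\<forall>x\<in>l2. \<forall>y\<in>l2. cinner x (T y) = cinner (T x) y)"

definition pos :: "((nat \<Rightarrow> complex) \<Rightarrow> (nat \<Rightarrow> complex)) \<Rightarrow> bool" where
  "pos T \<longleftrightarrow> (\<forall>x\<in>l2. 0 \<le> Re (cinner x (T x)))"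

definition bnd :: "((nat \<Rightarrow> complex) \<Rightarrow> (nat \<Rightarrow> complex)) \<Rightarrow> bool" where
  "bnd T \<longleftrightarrow> (\<forall>x\<in>l2. nrm2 (T x) \<le> nrm2 x)"

lemma sal_l2: "sal T \<Longrightarrow> x \<in> l2 \<Longrightarrow> T x \<in> l2" by (simp add: sal_def)
lemma sal_lin: "sal T \<Longrightarrow> x \<in> l2 \<Longrightarrow> y \<in> l2 \<Longrightarrow> T (\<lambda>i. a * x i + b * y i) = (\<lambda>i. a * T x i + b * T y i)"
  by (simp add: sal_def)
lemma sal_sa: "sal T \<Longrightarrow> x \<in> l2 \<Longrightarrow> y \<in> l2 \<Longrightarrow> cinner x (T y) = cinner (T x) y"
  by (simp add: sal_def)

lemma sal_diff: "sal T \<Longrightarrow> x \<in> l2 \<Longrightarrow> y \<in> l2 \<Longrightarrow> T (\<lambda>i. x i - y i) = (\<lambda>i. T x i - T y i)"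
  using sal_lin[of T x y 1 "-1"] by simp

lemma sal_id: "sal (\<lambda>x. x)" by (simp add: sal_def)

lemma sal_comp:
  assumes T: "sal T" and U: "sal U" and c: "\<And>x. x \<in> l2 \<Longrightarrow> T (U x) = U (T x)"
  shows "sal (\<lambda>x. T (U x))"
  unfolding sal_def
proof (intro conjI ballI allI)
  fix x assume x: "x \<in> l2" thus "T (U x) \<in> l2" using T U by (simp add: sal_l2)
next
  fix x y a b assume x: "x \<in> l2" and y: "y \<in> l2"
  show "T (U (\<lambda>i. a * x i + b * y i)) = (\<lambda>i. a * T (U x) i + b * T (U y) i)"
    using x y T U by (simp add: sal_lin sal_l2)
next
  fix x y assume x: "x \<in> l2" and y: "y \<in> l2"
  have "cinner x (T (U y)) = cinner (T x) (U y)" using x y T U by (simp add: sal_sa sal_l2)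
  also have "\<dots> = cinner (U (T x)) y" using x y T U by (simp add: sal_sa sal_l2)
  also have "\<dots> = cinner (T (U x)) y" using c x by simp
  finally show "cinner x (T (U y)) = cinner (T (U x)) y" .
qed

lemma sal_pow: "sal T \<Longrightarrow> sal (T ^^ n)"
proof (induction n)
  case 0 thus ?case using sal_id by simp
next
  case (Suc n)
  have "sal (\<lambda>x. T ((T ^^ n) x))"
    by (rule sal_comp[OF Suc.prems Suc.IH[OF Suc.prems]]) (simp add: funpow_swap1)
  thus ?case by (simp add: o_def)
qed

lemma sal_sub:
  assumes T: "sal T" and U: "sal U"
  shows "sal (\<lambda>x i. T x i - U x i)"
  unfolding sal_def
proof (intro conjI ballI allI)
  fix x assume x: "x \<in> l2" thus "(\<lambda>i. T x i - U x i) \<in> l2" using T U by (simp add: sal_l2 l2_diff)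
next
  fix x y a b assume x: "x \<in> l2" and y: "y \<in> l2"
  show "(\<lambda>i. T (\<lambda>i. a * x i + b * y i) i - U (\<lambda>i. a * x i + b * y i) i) =
        (\<lambda>i. a * (T x i - U x i) + b * (T y i - U y i))"
    using x y T U by (simp add: sal_lin algebra_simps)
next
  fix x y assume x: "x \<in> l2" and y: "y \<in> l2"
  show "cinner x (\<lambda>i. T y i - U y i) = cinner (\<lambda>i. T x i - U x i) y"
    using x y T U by (simp add: cinner_diff1 cinner_diff2 sal_l2 sal_sa)
qed

lemma comm_pow:
  assumes T: "sal T" and U: "sal U" and c: "\<And>x. x \<in> l2 \<Longrightarrow> T (U x) = U (T x)"
  shows "x \<in> l2 \<Longrightarrow> T ((U ^^ n) x) = (U ^^ n) (T x)"
proof (induction n arbitrary: x)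
  case 0 thus ?case by simp
next
  case (Suc n)
  have "T ((U ^^ Suc n) x) = T ((U ^^ n) (U x))" by (simp add: funpow_swap1)
  also have "\<dots> = (U ^^ n) (T (U x))" using Suc U by (simp add: sal_l2)
  also have "\<dots> = (U ^^ Suc n) (T x)" using c Suc by (simp add: funpow_swap1)
  finally show ?case .
qed

lemma pow_l2: "sal T \<Longrightarrow> x \<in> l2 \<Longrightarrow> (T ^^ n) x \<in> l2"
  using sal_pow sal_l2 by blast

lemma pos_pow:
  assumes T: "sal T" and P: "pos T"
  shows "pos (T ^^ n)"
  unfolding pos_def
proof
  fix x assume x: "x \<in> l2"
  have "n = n div 2 + n div 2 \<or> n = n div 2 + (1 + n div 2)" by presburger
  then obtain m where "n = m + m \<or> n = m + (1 + m)" by blast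
  thus "0 \<le> Re (cinner x ((T ^^ n) x))"
  proof
    assume n: "n = m + m"
    have "cinner x ((T ^^ n) x) = cinner x ((T ^^ m) ((T ^^ m) x))" by (simp add: n funpow_add)
    also have "\<dots> = cinner ((T ^^ m) x) ((T ^^ m) x)" using x T sal_pow by (simp add: sal_sa pow_l2)
    also have "\<dots> = of_real (nrm2 ((T ^^ m) x))" using x T by (simp add: cinner_self pow_l2)
    finally show ?thesis using nrm2_nonneg[OF pow_l2[OF T x]] by simp
  next
    assume n: "n = m + (1 + m)"
    have "cinner x ((T ^^ n) x) = cinner x ((T ^^ m) (T ((T ^^ m) x)))" by (simp add: n funpow_add) (metis funpow_swap1)
    also have "\<dots> = cinner ((T ^^ m) x) (T ((T ^^ m) x))" using x T sal_pow by (simp add: sal_sa pow_l2 sal_l2)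
    finally show ?thesis using P pow_l2[OF T x] unfolding pos_def by simp
  qed
qed

lemma bnd_pow:
  assumes T: "sal T" and B: "bnd T"
  shows "x \<in> l2 \<Longrightarrow> nrm2 ((T ^^ n) x) \<le> nrm2 x"
proof (induction n)
  case 0 thus ?case by simp
next
  case (Suc n)
  have "nrm2 ((T ^^ Suc n) x) = nrm2 (T ((T ^^ n) x))" by simp
  also have "\<dots> \<le> nrm2 ((T ^^ n) x)" using B pow_l2[OF T Suc.prems] unfolding bnd_def by blast
  finally show ?case using Suc by simp
qed

definition Sop :: "((nat \<Rightarrow> complex) \<Rightarrow> (nat \<Rightarrow> complex)) \<Rightarrow> (nat \<Rightarrow> complex) \<Rightarrow> (nat \<Rightarrow> complex)" where
  "Sop A = (\<lambda>x i. x i - A x i)"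

lemma sal_Sop: "sal A \<Longrightarrow> sal (Sop A)"
  unfolding Sop_def using sal_sub[OF sal_id] by blast

lemma Sop_comm: "sal A \<Longrightarrow> x \<in> l2 \<Longrightarrow> A (Sop A x) = Sop A (A x)"
  unfolding Sop_def by (simp add: sal_diff sal_l2)

lemma Sop_pow_comm: "sal A \<Longrightarrow> x \<in> l2 \<Longrightarrow> A ((Sop A ^^ n) x) = (Sop A ^^ n) (A x)"
  by (rule comm_pow[OF _ sal_Sop]) (auto simp: Sop_comm)

lemma cs_self:
  assumes "sal T" "bnd T" "x \<in> l2"
  shows "Re (cinner x (T x)) \<le> nrm2 x"
proof -
  have "Re (cinner x (T x)) \<le> cmod (cinner x (T x))" by (rule complex_Re_le_cmod)
  also have "\<dots> \<le> sqrt (nrm2 x) * sqrt (nrm2 (T x))" using assms by (simp add: cs sal_l2)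
  also have "\<dots> \<le> sqrt (nrm2 x) * sqrt (nrm2 x)"
    using assms nrm2_nonneg[OF assms(3)] by (intro mult_left_mono) (auto simp: bnd_def)
  also have "\<dots> = nrm2 x" using nrm2_nonneg[OF assms(3)] by simp
  finally show ?thesis .
qed

lemma pos_Sop:
  assumes "sal A" "bnd A"
  shows "pos (Sop A)"
  unfolding pos_def
proof
  fix x assume x: "x \<in> l2"
  have "cinner x (Sop A x) = cinner x x - cinner x (A x)"
    unfolding Sop_def using x assms by (simp add: cinner_diff2 sal_l2)
  thus "0 \<le> Re (cinner x (Sop A x))" using cs_self[OF assms x] x by (simp add: cinner_self)
qed

lemma infsum_suminf_nat:
  fixes g :: "nat \<Rightarrow> 'a::{banach}"
  assumes "g summable_on UNIV"
  shows "g sums infsum g UNIV"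
  using has_sum_imp_sums[OF has_sum_infsum[OF assms]] .

lemma prod_has_sum:
  fixes a b :: "nat \<Rightarrow> real"
  assumes a0: "\<And>i. 0 \<le> a i" and b0: "\<And>i. 0 \<le> b i" and sa: "a sums A" and sb: "b sums B"
  shows "((\<lambda>(i,j). a i * b j) has_sum (A * B)) UNIV"
proof -
  have ha: "(a has_sum A) UNIV" using sums_nonneg_imp_has_sum[OF sa a0] .
  have hb: "(b has_sum B) UNIV" using sums_nonneg_imp_has_sum[OF sb b0] .
  have rows: "((\<lambda>j. (\<lambda>(i,j). a i * b j) (i, j)) has_sum a i * B) UNIV" for i
    using has_sum_cmult_right[OF hb, of "a i"] by simp
  have g: "((\<lambda>i. a i * B) has_sum A * B) UNIV" using has_sum_cmult_left[OF ha] .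
  have "(\<lambda>(i,j). a i * b j) summable_on Sigma UNIV (\<lambda>_. UNIV)"
    by (rule summable_on_SigmaI[OF rows]) (use g a0 b0 in \<open>auto simp: has_sum_imp_summable\<close>)
  hence "((\<lambda>(i,j). a i * b j) has_sum (A * B)) (Sigma UNIV (\<lambda>_. UNIV))"
    by (intro has_sum_SigmaI[OF rows g])
  thus ?thesis by simp
qed

locale hs =
  fixes M :: "nat \<Rightarrow> nat \<Rightarrow> complex"
  assumes herm: "\<And>i j. M i j = cnj (M j i)"
    and hs_sum: "(\<lambda>(i, j). (cmod (M i j))^2) summable_on UNIV"
    and hs_le: "(\<Sum>\<^sub>\<infinity>(i, j)\<in>UNIV. (cmod (M i j))^2) \<le> 1"
begin

definition r :: "nat \<Rightarrow> real" where "r i = (\<Sum>j. (cmod (M i j))^2)"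

lemma row_summable: "summable (\<lambda>j. (cmod (M i j))^2)"
proof -
  have "(\<lambda>(i, j). (cmod (M i j))^2) summable_on Sigma UNIV (\<lambda>_. UNIV)" using hs_sum by simp
  from summable_on_SigmaD1[OF this, of i] have "(\<lambda>j. (cmod (M i j))^2) summable_on UNIV" by simp
  thus ?thesis by (simp add: summable_on_UNIV_nonneg_real_iff)
qed

lemma r_sums: "summable r \<and> suminf r \<le> 1"
proof -
  let ?f = "\<lambda>(i, j). (cmod (M i j))^2"
  have S: "?f summable_on Sigma UNIV (\<lambda>_. UNIV)" using hs_sum by simp
  have rowsum: "(\<lambda>j. ?f (i, j)) summable_on UNIV" for i
    using summable_on_SigmaD1[OF S, of i] by simp
  have ri: "infsum (\<lambda>j. ?f (i, j)) UNIV = r i" for i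
    using infsum_suminf_nat[OF rowsum[of i]] unfolding r_def by (simp add: sums_iff)
  have "(\<lambda>i. infsum (\<lambda>j. ?f (i, j)) UNIV) summable_on UNIV"
    by (rule summable_on_SigmaD[OF S]) (use rowsum in auto)
  hence rs: "r summable_on UNIV" using ri by simp
  have "infsum (\<lambda>i. infsum (\<lambda>j. ?f (i, j)) UNIV) UNIV = infsum ?f (Sigma UNIV (\<lambda>_. UNIV))"
    by (rule infsum_Sigma_banach[OF S])
  hence "infsum r UNIV = infsum ?f UNIV" using ri by simp
  moreover have "r sums infsum r UNIV" by (rule infsum_suminf_nat[OF rs])
  ultimately show ?thesis using hs_le by (auto simp: sums_iff)
qed

definition rowv :: "nat \<Rightarrow> nat \<Rightarrow> complex" where "rowv i = (\<lambda>j. cnj (M i j))"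

lemma rowv_l2: "rowv i \<in> l2"
  using row_summable[of i] by (simp add: rowv_def l2_def)

lemma nrm2_rowv: "nrm2 (rowv i) = r i"
  by (simp add: rowv_def nrm2_def r_def)

lemma mat_op_eq: "mat_op M x i = cinner (rowv i) x"
  by (simp add: mat_op_def cinner_def rowv_def)

lemma mat_op_bound:
  assumes x: "x \<in> l2"
  shows "mat_op M x \<in> l2 \<and> nrm2 (mat_op M x) \<le> nrm2 x"
proof -
  have b: "(cmod (mat_op M x i))^2 \<le> r i * nrm2 x" for i
    using cs2[OF rowv_l2 x, of i] by (simp add: mat_op_eq nrm2_rowv)
  have s: "summable (\<lambda>i. r i * nrm2 x)" using r_sums by (intro summable_mult2) simp
  have sm: "summable (\<lambda>i. (cmod (mat_op M x i))^2)"
    by (rule summable_comparison_test'[where N=0, OF s]) (use b in simp)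
  have "nrm2 (mat_op M x) \<le> (\<Sum>i. r i * nrm2 x)"
    unfolding nrm2_def[of "mat_op M x"] by (rule suminf_le[OF b sm s])
  also have "\<dots> = suminf r * nrm2 x" using r_sums by (simp add: suminf_mult2)
  also have "\<dots> \<le> 1 * nrm2 x" using r_sums nrm2_nonneg[OF x] by (intro mult_right_mono) auto
  finally show ?thesis using sm by (simp add: l2_def)
qed


lemma mat_op_basis: "mat_op M (basis_vec j) i = M i j"
proof -
  have "(\<lambda>k. M i k * basis_vec j k) = (\<lambda>k. if k = j then M i k else 0)"
    by (auto simp: basis_vec_def)
  thus ?thesis unfolding mat_op_def using sums_single[of j "M i"] by (simp add: sums_iff)
qed

lemma nrm2_mat_basis: "nrm2 (mat_op M (basis_vec i)) = r i"
proof -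
  have "(\<lambda>j. (cmod (mat_op M (basis_vec i) j))^2) = (\<lambda>j. (cmod (M i j))^2)"
    by (rule ext) (metis complex_mod_cnj herm mat_op_basis)
  thus ?thesis by (simp add: nrm2_def r_def)
qed

lemma mat_op_lin:
  assumes "x \<in> l2" "y \<in> l2"
  shows "mat_op M (\<lambda>i. a * x i + b * y i) = (\<lambda>i. a * mat_op M x i + b * mat_op M y i)"
  using assms by (intro ext) (simp add: mat_op_eq cinner_lin2 rowv_l2)

lemma mat_op_sa:
  assumes x: "x \<in> l2" and y: "y \<in> l2"
  shows "cinner x (mat_op M y) = cinner (mat_op M x) y"
proof -
  define f where "f = (\<lambda>i j. cnj (x i) * M i j * y j)"
  have sx: "summable (\<lambda>i. (cmod (x i))^2)" and sy: "summable (\<lambda>i. (cmod (y i))^2)"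
    using x y by (auto simp: l2_def)
  have P: "((\<lambda>(i,j). (cmod (x i))^2 * (cmod (y j))^2) has_sum (nrm2 x * nrm2 y)) UNIV"
    unfolding nrm2_def by (rule prod_has_sum) (use sx sy in \<open>auto intro: summable_sums\<close>)
  have G: "(\<lambda>p. (\<lambda>(i,j). (cmod (M i j))^2) p + (\<lambda>(i,j). (cmod (x i))^2 * (cmod (y j))^2) p) summable_on UNIV"
    using hs_sum P by (intro summable_on_add) (auto simp: has_sum_imp_summable)
  have bnd: "norm (f i j) \<le> (cmod (M i j))^2 + (cmod (x i))^2 * (cmod (y j))^2" for i j
  proof -
    have "0 \<le> (cmod (M i j) - cmod (x i) * cmod (y j))^2" by simp
    hence "2 * (cmod (M i j) * (cmod (x i) * cmod (y j))) \<le> (cmod (M i j))^2 + (cmod (x i))^2 * (cmod (y j))^2"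
      by (simp add: power2_diff power_mult_distrib)
    moreover have "norm (f i j) = cmod (M i j) * (cmod (x i) * cmod (y j))"
      by (simp add: f_def norm_mult)
    moreover have "0 \<le> cmod (M i j) * (cmod (x i) * cmod (y j))" by simp
    ultimately show ?thesis by linarith
  qed
  have AS: "(\<lambda>p. norm ((\<lambda>(i,j). f i j) p)) summable_on UNIV"
    by (rule Infinite_Sum.abs_summable_on_comparison_test'[OF G]) (use bnd in \<open>auto simp: case_prod_unfold\<close>)
  hence FS: "(\<lambda>(i,j). f i j) summable_on UNIV \<times> UNIV" using abs_summable_summable by simp
  have swap: "infsum (\<lambda>i. infsum (\<lambda>j. f i j) UNIV) UNIV = infsum (\<lambda>j. infsum (\<lambda>i. f i j) UNIV) UNIV"
    by (rule infsum_swap_banach[OF FS])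
  have FS': "(\<lambda>(i,j). f i j) summable_on Sigma UNIV (\<lambda>_. UNIV)" using FS by simp
  have r1: "(\<lambda>j. f i j) summable_on UNIV" for i using summable_on_SigmaD1[OF FS'] by simp
  have FS2: "(\<lambda>(j,i). f i j) summable_on Sigma UNIV (\<lambda>_. UNIV)"
    using FS summable_on_swap[of "\<lambda>(i,j). f i j" UNIV UNIV] by (simp add: case_prod_unfold)
  have r2: "(\<lambda>i. f i j) summable_on UNIV" for j using summable_on_SigmaD1[OF FS2, of j] by simp
  have o1: "(\<lambda>i. infsum (\<lambda>j. f i j) UNIV) summable_on UNIV"
    using summable_on_SigmaD[OF FS'] r1 by simp
  have o2: "(\<lambda>j. infsum (\<lambda>i. f i j) UNIV) summable_on UNIV"
    using summable_on_SigmaD[OF FS2] r2 by simp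
  have e1: "infsum (\<lambda>j. f i j) UNIV = cnj (x i) * mat_op M y i" for i
  proof -
    have "(\<lambda>j. f i j) sums infsum (\<lambda>j. f i j) UNIV" by (rule infsum_suminf_nat[OF r1])
    moreover have "(\<lambda>j. cnj (x i) * (M i j * y j)) sums (cnj (x i) * mat_op M y i)"
      unfolding mat_op_def
      by (rule sums_mult, rule summable_sums)
         (use summable_inner[OF rowv_l2 y, of i] in \<open>simp add: rowv_def\<close>)
    ultimately show ?thesis by (simp add: f_def sums_iff mult.assoc)
  qed
  have e2: "infsum (\<lambda>i. f i j) UNIV = cnj (mat_op M x j) * y j" for j
  proof -
    have "(\<lambda>i. f i j) sums infsum (\<lambda>i. f i j) UNIV" by (rule infsum_suminf_nat[OF r2])
    moreover have "(\<lambda>i. cnj (M j i * x i)) sums cnj (mat_op M x j)"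
      unfolding mat_op_def sums_cnj
      by (rule summable_sums) (use summable_inner[OF rowv_l2 x, of j] in \<open>simp add: rowv_def\<close>)
    hence "(\<lambda>i. cnj (M j i * x i) * y j) sums (cnj (mat_op M x j) * y j)" by (rule sums_mult2)
    moreover have "(\<lambda>i. f i j) = (\<lambda>i. cnj (M j i * x i) * y j)"
      by (rule ext) (simp add: f_def herm[of _ j])
    ultimately show ?thesis by (simp add: sums_iff)
  qed
  have "cinner x (mat_op M y) = infsum (\<lambda>i. infsum (\<lambda>j. f i j) UNIV) UNIV"
    using infsum_suminf_nat[OF o1] by (simp add: cinner_def e1 sums_iff)
  also have "\<dots> = infsum (\<lambda>j. infsum (\<lambda>i. f i j) UNIV) UNIV" by (rule swap)
  also have "\<dots> = cinner (mat_op M x) y"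
    using infsum_suminf_nat[OF o2] by (simp add: cinner_def e2 sums_iff)
  finally show ?thesis .
qed

lemma sal_A: "sal (mat_op M)"
  unfolding sal_def using mat_op_bound mat_op_lin mat_op_sa by blast

lemma bnd_A: "bnd (mat_op M)"
  unfolding bnd_def using mat_op_bound by blast

end

lemma Re_suminf: "summable f \<Longrightarrow> Re (suminf f) = (\<Sum>i. Re (f i))"
  using sums_complex_iff[of f "suminf f"] by (simp add: summable_sums sums_iff)

lemma scalar_psd:
  fixes p q :: real and m :: complex
  assumes H: "\<And>a b. 0 \<le> Re (cnj a * (a * p + b * m) + cnj b * (a * cnj m + b * q))"
  shows "(cmod m)^2 \<le> p * q"
proof -
  have p0: "0 \<le> p" using H[of 1 0] by simp
  have key: "0 \<le> t^2 * (cmod m)^2 * p - 2 * t * (cmod m)^2 + q" for t :: real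
  proof -
    have "Re (cnj (- (of_real t * m)) * (- (of_real t * m) * p + 1 * m) + cnj 1 * (- (of_real t * m) * cnj m + 1 * q))
        = t^2 * (cmod m)^2 * p - 2 * t * (cmod m)^2 + q"
      unfolding cmod_power2 by (simp add: power2_eq_square algebra_simps)
    thus ?thesis using H[of "- (of_real t * m)" 1] by simp
  qed
  show ?thesis
  proof (cases "p = 0")
    case True
    show ?thesis
    proof (rule ccontr)
      assume nt: "\<not> (cmod m)^2 \<le> p * q"
      define c where "c = (cmod m)^2"
      have m0: "c > 0" using True nt by (simp add: c_def)
      have k0: "0 \<le> - 2 * t * c + q" for t using key[of t] True by (simp add: c_def)
      have "0 \<le> - 2 * ((q + 1) / (2 * c)) * c + q" by (rule k0)
      also have "\<dots> = -1" using m0 by (simp add: field_simps)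
      finally show False by simp
    qed
  next
    case False
    hence pp: "p > 0" using p0 by simp
    have "0 \<le> (1/p)^2 * (cmod m)^2 * p - 2 * (1/p) * (cmod m)^2 + q" by (rule key)
    also have "\<dots> = q - (cmod m)^2 / p" using pp by (simp add: field_simps power2_eq_square)
    finally have "(cmod m)^2 / p \<le> q" by simp
    thus ?thesis using pp by (simp add: field_simps mult.commute)
  qed
qed

locale dens =
  fixes T :: "(nat \<Rightarrow> complex) \<Rightarrow> (nat \<Rightarrow> complex)"
  assumes D: "density_operator T"
begin

definition MM :: "nat \<Rightarrow> nat \<Rightarrow> complex" where
  "MM i j = cinner (basis_vec i) (T (basis_vec j))"

lemmas DD = D[unfolded density_operator_def]
lemma T_l2: "x \<in> l2 \<Longrightarrow> T x \<in> l2" using conjunct1[OF DD] by blast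
lemma T_lin: "x \<in> l2 \<Longrightarrow> y \<in> l2 \<Longrightarrow> T (\<lambda>i. a * x i + b * y i) = (\<lambda>i. a * T x i + b * T y i)"
  using conjunct1[OF conjunct2[OF DD]] by blast
lemma T_sa: "x \<in> l2 \<Longrightarrow> y \<in> l2 \<Longrightarrow> cinner x (T y) = cinner (T x) y"
  using conjunct1[OF conjunct2[OF conjunct2[OF DD]]] by blast
lemma T_pos: "x \<in> l2 \<Longrightarrow> 0 \<le> Re (cinner x (T x))"
  using conjunct1[OF conjunct2[OF conjunct2[OF conjunct2[OF DD]]]] by blast
lemma T_tr: "(\<lambda>i. MM i i) sums 1"
  unfolding MM_def by (rule conjunct2[OF conjunct2[OF conjunct2[OF conjunct2[OF DD]]]])

lemma MM_eq: "MM i j = T (basis_vec j) i" by (simp add: MM_def cinner_basis_left)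

lemma herm: "MM i j = cnj (MM j i)"
proof -
  have "MM i j = cinner (T (basis_vec i)) (basis_vec j)" unfolding MM_def by (rule T_sa[OF basis_l2 basis_l2])
  also have "\<dots> = cnj (MM j i)" unfolding MM_def by (rule cinner_sym[OF basis_l2 T_l2[OF basis_l2]])
  finally show ?thesis .
qed

lemma T_mat: assumes x: "x \<in> l2" shows "T x = mat_op MM x"
proof (rule ext)
  fix i
  have e: "(\<lambda>j. cnj (MM j i) * x j) = (\<lambda>j. MM i j * x j)"
  proof (rule ext)
    fix j show "cnj (MM j i) * x j = MM i j * x j" using herm[of i j] by simp
  qed
  have "T x i = cinner (basis_vec i) (T x)" by (simp add: cinner_basis_left)
  also have "\<dots> = cinner (T (basis_vec i)) x" using x by (simp add: T_sa basis_l2)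
  also have "\<dots> = (\<Sum>j. cnj (MM j i) * x j)" by (simp add: cinner_def MM_eq)
  also have "\<dots> = mat_op MM x i" by (simp add: mat_op_def e)
  finally show "T x i = mat_op MM x i" .
qed

lemma diag_real: "MM i i = of_real (Re (MM i i))"
proof -
  have "Im (MM i i) = 0" using arg_cong[OF herm[of i i], of Im] by simp
  thus ?thesis by (simp add: complex_eq_iff)
qed

lemma diag_nonneg: "0 \<le> Re (MM i i)"
  using T_pos[OF basis_l2[of i]] by (simp add: MM_def)

lemma entry_bound: "(cmod (MM i j))^2 \<le> Re (MM i i) * Re (MM j j)"
proof (rule scalar_psd)
  fix a b :: complex
  let ?x = "\<lambda>k. a * basis_vec i k + b * basis_vec j k"
  have x: "?x \<in> l2" by (intro l2_lin basis_l2)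
  have Tx: "T ?x = (\<lambda>k. a * T (basis_vec i) k + b * T (basis_vec j) k)" by (simp add: T_lin basis_l2)
  have "cinner ?x (T ?x) = cnj a * cinner (basis_vec i) (T ?x) + cnj b * cinner (basis_vec j) (T ?x)"
    using x by (intro cinner_lin1 basis_l2 T_l2)
  also have "\<dots> = cnj a * (a * MM i i + b * MM i j) + cnj b * (a * MM j i + b * MM j j)"
    by (simp add: Tx cinner_basis_left MM_eq)
  also have "\<dots> = cnj a * (a * Re (MM i i) + b * MM i j) + cnj b * (a * cnj (MM i j) + b * Re (MM j j))"
  proof -
    define p where "p = Re (MM i i)"
    define q where "q = Re (MM j j)"
    have "MM i i = of_real p" unfolding p_def by (rule diag_real)
    moreover have "MM j j = of_real q" unfolding q_def by (rule diag_real)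
    ultimately show ?thesis using herm[of j i] by (simp add: p_def[symmetric] q_def[symmetric])
  qed
  finally show "0 \<le> Re (cnj a * (a * Re (MM i i) + b * MM i j) + cnj b * (a * cnj (MM i j) + b * Re (MM j j)))"
    using T_pos[OF x] by simp
qed

lemma hs_MM: "(\<lambda>(i, j). (cmod (MM i j))^2) summable_on UNIV \<and>
       (\<Sum>\<^sub>\<infinity>(i, j)\<in>UNIV. (cmod (MM i j))^2) \<le> 1"
proof -
  have ps: "(\<lambda>i. Re (MM i i)) sums 1" using T_tr sums_complex_iff by fastforce
  have P: "((\<lambda>(i,j). Re (MM i i) * Re (MM j j)) has_sum (1 * 1)) UNIV"
    by (rule prod_has_sum[OF diag_nonneg diag_nonneg ps ps])
  have S: "(\<lambda>(i, j). (cmod (MM i j))^2) summable_on UNIV"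
    by (rule summable_on_comparison_test[OF has_sum_imp_summable[OF P]]) (auto simp: entry_bound)
  have "(\<Sum>\<^sub>\<infinity>(i, j)\<in>UNIV. (cmod (MM i j))^2) \<le> (\<Sum>\<^sub>\<infinity>(i, j)\<in>UNIV. Re (MM i i) * Re (MM j j))"
    by (rule infsum_mono[OF S has_sum_imp_summable[OF P]]) (auto simp: entry_bound)
  also have "\<dots> = 1" using P by (simp add: has_sum_iff)
  finally show ?thesis using S by simp
qed

lemma hs_loc: "hs MM"
  unfolding hs_def using hs_MM herm by blast

lemma pos_mat: "pos (mat_op MM)"
  unfolding pos_def using T_pos T_mat by simp

end

lemma sal_real: "sal H \<Longrightarrow> x \<in> l2 \<Longrightarrow> Im (cinner x (H x)) = 0"
proof -
  assume H: "sal H" and x: "x \<in> l2"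
  have "cinner x (H x) = cinner (H x) x" by (rule sal_sa[OF H x x])
  also have "\<dots> = cnj (cinner x (H x))" by (rule cinner_sym[OF x sal_l2[OF H x]])
  finally have "cinner x (H x) = cnj (cinner x (H x))" .
  from arg_cong[OF this, of Im] show ?thesis by simp
qed

lemma hs_bound:
  assumes H: "sal H" and s: "summable (\<lambda>i. nrm2 (H (basis_vec i)))" and x: "x \<in> l2"
  shows "nrm2 (H x) \<le> (\<Sum>i. nrm2 (H (basis_vec i))) * nrm2 x"
proof -
  have b: "(cmod (H x j))^2 \<le> nrm2 (H (basis_vec j)) * nrm2 x" for j
  proof -
    have "H x j = cinner (basis_vec j) (H x)" by (simp add: cinner_basis_left)
    also have "\<dots> = cinner (H (basis_vec j)) x" by (rule sal_sa[OF H basis_l2 x])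
    finally show ?thesis using cs2[OF sal_l2[OF H basis_l2] x, of j] by simp
  qed
  have sm: "summable (\<lambda>j. (cmod (H x j))^2)" using sal_l2[OF H x] by (simp add: l2_def)
  have s2: "summable (\<lambda>j. nrm2 (H (basis_vec j)) * nrm2 x)" by (rule summable_mult2[OF s])
  have "nrm2 (H x) \<le> (\<Sum>j. nrm2 (H (basis_vec j)) * nrm2 x)"
    unfolding nrm2_def[of "H x"] by (rule suminf_le[OF b sm s2])
  also have "\<dots> = (\<Sum>i. nrm2 (H (basis_vec i))) * nrm2 x" by (rule suminf_mult2[OF s, symmetric])
  finally show ?thesis .
qed

lemma binom_step:
  fixes v :: "nat \<Rightarrow> complex"
  shows "(\<Sum>k\<le>n. (-1)^k * of_nat (n choose k) * (v k - v (Suc k))) =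
         (\<Sum>k\<le>Suc n. (-1)^k * of_nat (Suc n choose k) * v k)"
proof -
  define P where "P = (\<Sum>k\<le>n. (-1)^k * of_nat (n choose k) * v k)"
  define Q where "Q = (\<Sum>k\<le>n. (-1)^k * of_nat (n choose k) * v (Suc k))"
  define R' where "R' = (\<Sum>k\<le>n. (-1)^(Suc k) * of_nat (n choose Suc k) * v (Suc k))"
  have 1: "(\<Sum>k\<le>Suc n. (-1)^k * of_nat (Suc n choose k) * v k) =
        v 0 + (\<Sum>k\<le>n. (-1)^(Suc k) * of_nat (Suc n choose Suc k) * v (Suc k))"
    by (subst sum.atMost_Suc_shift) simp
  have 2: "(\<Sum>k\<le>n. (-1)^(Suc k) * of_nat (Suc n choose Suc k) * v (Suc k)) = R' - Q"
    unfolding R'_def Q_def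
    by (subst sum_subtractf[symmetric], rule sum.cong) (auto simp: algebra_simps)
  have 3: "v 0 + R' = (\<Sum>k\<le>Suc n. (-1)^k * of_nat (n choose k) * v k)"
    unfolding R'_def by (subst sum.atMost_Suc_shift) simp
  have 4: "(\<Sum>k\<le>Suc n. (-1)^k * of_nat (n choose k) * v k) = P"
    unfolding P_def by simp
  have 5: "(\<Sum>k\<le>n. (-1)^k * of_nat (n choose k) * (v k - v (Suc k))) = P - Q"
    unfolding P_def Q_def by (subst sum_subtractf[symmetric]) (simp add: algebra_simps)
  have "(\<Sum>k\<le>Suc n. (-1)^k * of_nat (Suc n choose k) * v k) = v 0 + (R' - Q)" using 1 2 by simp
  also have "\<dots> = (v 0 + R') - Q" by simp
  also have "\<dots> = P - Q" using 3 4 by simp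
  finally show ?thesis using 5 by simp
qed

locale hs_tr = hs +
  assumes tr: "(\<lambda>i. M i i) sums 1"
begin

abbreviation "A \<equiv> mat_op M"
abbreviation "S \<equiv> Sop (mat_op M)"
abbreviation "e \<equiv> basis_vec"

definition t :: "nat \<Rightarrow> nat \<Rightarrow> complex" where
  "t k i = cinner (e i) ((A ^^ (k + 1)) (e i))"

definition g :: "nat \<Rightarrow> nat \<Rightarrow> complex" where
  "g n i = cinner (e i) (A ((S ^^ n) (e i)))"

lemma salS: "sal S" by (rule sal_Sop[OF sal_A])
lemma posS: "pos S" by (rule pos_Sop[OF sal_A bnd_A])

lemma Ae_l2: "A (e i) \<in> l2" by (rule sal_l2[OF sal_A basis_l2])
lemma Spow_l2: "x \<in> l2 \<Longrightarrow> (S ^^ n) x \<in> l2" by (rule pow_l2[OF salS])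
lemma Apow_l2: "x \<in> l2 \<Longrightarrow> (A ^^ n) x \<in> l2" by (rule pow_l2[OF sal_A])

lemma r_nonneg: "0 \<le> r i" unfolding r_def by (intro suminf_nonneg row_summable) simp

lemma t_summable: "summable (t k)"
proof (cases k)
  case 0
  have "t k = (\<lambda>i. M i i)" using 0 by (auto simp: t_def cinner_basis_left mat_op_basis)
  thus ?thesis using tr by (simp add: sums_summable)
next
  case (Suc k')
  have b: "norm (t k i) \<le> r i" for i
  proof -
    have "(A ^^ (k + 1)) (e i) = A ((A ^^ k') (A (e i)))" using Suc by (simp add: funpow_swap1)
    hence "t k i = cinner (A (e i)) ((A ^^ k') (A (e i)))"
      unfolding t_def using sal_sa[OF sal_A basis_l2 Apow_l2[OF Ae_l2]] by simp
    hence "norm (t k i) \<le> sqrt (nrm2 (A (e i))) * sqrt (nrm2 ((A ^^ k') (A (e i))))"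
      using cs[OF Ae_l2 Apow_l2[OF Ae_l2]] by simp
    also have "\<dots> \<le> sqrt (nrm2 (A (e i))) * sqrt (nrm2 (A (e i)))"
      using bnd_pow[OF sal_A bnd_A Ae_l2] nrm2_nonneg[OF Ae_l2] by (intro mult_left_mono) auto
    also have "\<dots> = r i" using nrm2_mat_basis[of i] r_nonneg[of i] by simp
    finally show ?thesis .
  qed
  show ?thesis by (rule summable_comparison_test'[where N=0]) (use r_sums b in auto)
qed

lemma A_S_pow:
  "x \<in> l2 \<Longrightarrow> A ((S ^^ n) x) = (\<lambda>j. \<Sum>k\<le>n. (-1)^k * of_nat (n choose k) * (A ^^ (k + 1)) x j)"
proof (induction n arbitrary: x)
  case 0 thus ?case by simp
next
  case (Suc n)
  have Sx: "S x \<in> l2" using sal_l2[OF salS Suc.prems] .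
  have "A ((S ^^ Suc n) x) = A ((S ^^ n) (S x))" by (simp add: funpow_swap1)
  also have "\<dots> = (\<lambda>j. \<Sum>k\<le>n. (-1)^k * of_nat (n choose k) * (A ^^ (k + 1)) (S x) j)"
    by (rule Suc.IH[OF Sx])
  also have "\<dots> = (\<lambda>j. \<Sum>k\<le>n. (-1)^k * of_nat (n choose k) *
                    ((A ^^ (k + 1)) x j - (A ^^ (Suc k + 1)) x j))"
  proof -
    have "(A ^^ (k + 1)) (S x) = (\<lambda>j. (A ^^ (k + 1)) x j - (A ^^ (Suc k + 1)) x j)" for k
    proof -
      have "(A ^^ (k + 1)) (S x) = (\<lambda>j. (A ^^ (k + 1)) x j - (A ^^ (k + 1)) (A x) j)"
        unfolding Sop_def by (rule sal_diff[OF sal_pow[OF sal_A] Suc.prems sal_l2[OF sal_A Suc.prems]])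
      moreover have "(A ^^ (k + 1)) (A x) = (A ^^ (Suc k + 1)) x" by (simp add: funpow_swap1)
      ultimately show ?thesis by simp
    qed
    thus ?thesis by simp
  qed
  also have "\<dots> = (\<lambda>j. \<Sum>k\<le>Suc n. (-1)^k * of_nat (Suc n choose k) * (A ^^ (k + 1)) x j)"
    using binom_step[of n "\<lambda>k. (A ^^ (k + 1)) _ _"] by (intro ext) (rule binom_step)
  finally show ?case .
qed

lemma g_eq: "g n i = (\<Sum>k\<le>n. (-1)^k * of_nat (n choose k) * t k i)"
  unfolding g_def t_def by (simp add: cinner_basis_left A_S_pow[OF basis_l2])

lemma g_summable: "summable (g n)"
  unfolding g_eq[abs_def] by (intro summable_sum summable_mult t_summable)

lemma trace_eq:
  "(\<Sum>k\<le>n. (-1)^k * of_nat (n choose k) * (\<Sum>i. cinner (e i) ((A ^^ (k + 1)) (e i)))) = (\<Sum>i. g n i)"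
proof -
  have "(\<Sum>k\<le>n. (-1)^k * of_nat (n choose k) * (\<Sum>i. cinner (e i) ((A ^^ (k + 1)) (e i))))
      = (\<Sum>k\<le>n. (\<Sum>i. (-1)^k * of_nat (n choose k) * t k i))"
    by (intro sum.cong refl) (subst suminf_mult[OF t_summable], simp add: t_def[abs_def])
  also have "\<dots> = (\<Sum>i. \<Sum>k\<le>n. (-1)^k * of_nat (n choose k) * t k i)"
    by (rule suminf_sum[symmetric]) (intro summable_mult t_summable)
  also have "\<dots> = (\<Sum>i. g n i)" by (simp add: g_eq)
  finally show ?thesis .
qed

lemma sal_H: "sal (\<lambda>y. A ((S ^^ n) y))"
  by (rule sal_comp[OF sal_A sal_pow[OF salS]]) (rule Sop_pow_comm[OF sal_A])

lemma g_real: "Im (g n i) = 0"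
  unfolding g_def by (rule sal_real[OF sal_H basis_l2])

lemma g_diff: "g n i - g (Suc n) i = cinner (A (e i)) ((S ^^ n) (A (e i)))"
proof -
  have "(S ^^ Suc n) (e i) = (S ^^ n) (\<lambda>k. e i k - A (e i) k)"
    by (simp only: funpow_Suc_right o_apply Sop_def)
  also have "\<dots> = (\<lambda>k. (S ^^ n) (e i) k - (S ^^ n) (A (e i)) k)"
    by (rule sal_diff[OF sal_pow[OF salS] basis_l2 Ae_l2])
  finally have 1: "A ((S ^^ Suc n) (e i)) = (\<lambda>k. A ((S ^^ n) (e i)) k - A ((S ^^ n) (A (e i))) k)"
    using sal_diff[OF sal_A Spow_l2[OF basis_l2] Spow_l2[OF Ae_l2]] by simp
  have "g (Suc n) i = g n i - cinner (e i) (A ((S ^^ n) (A (e i))))"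
    unfolding g_def 1
    by (rule cinner_diff2[OF basis_l2 sal_l2[OF sal_A Spow_l2[OF basis_l2]] sal_l2[OF sal_A Spow_l2[OF Ae_l2]]])
  moreover have "cinner (e i) (A ((S ^^ n) (A (e i)))) = cinner (A (e i)) ((S ^^ n) (A (e i)))"
    by (rule sal_sa[OF sal_A basis_l2 Spow_l2[OF Ae_l2]])
  ultimately show ?thesis by simp
qed

lemma g_diff_nonneg: "0 \<le> Re (g n i - g (Suc n) i)"
  unfolding g_diff using pos_pow[OF salS posS, of n] Ae_l2 unfolding pos_def by blast

lemma g_even: "g (m + m) i = cinner ((S ^^ m) (e i)) (A ((S ^^ m) (e i)))"
proof -
  have "A ((S ^^ (m + m)) (e i)) = (S ^^ m) (A ((S ^^ m) (e i)))"
    by (simp add: funpow_add Sop_pow_comm[OF sal_A Spow_l2[OF basis_l2]])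
  hence "g (m + m) i = cinner (e i) ((S ^^ m) (A ((S ^^ m) (e i))))" by (simp add: g_def)
  also have "\<dots> = cinner ((S ^^ m) (e i)) (A ((S ^^ m) (e i)))"
    by (rule sal_sa[OF sal_pow[OF salS] basis_l2 sal_l2[OF sal_A Spow_l2[OF basis_l2]]])
  finally show ?thesis .
qed

lemma g_tele: "(\<Sum>n<N. g n i) = 1 - cinner (e i) ((S ^^ N) (e i))"
proof -
  have step: "g n i = cinner (e i) ((S ^^ n) (e i)) - cinner (e i) ((S ^^ Suc n) (e i))" for n
  proof -
    have "(S ^^ Suc n) (e i) = (\<lambda>k. (S ^^ n) (e i) k - A ((S ^^ n) (e i)) k)"
      by (simp add: Sop_def)
    hence "cinner (e i) ((S ^^ Suc n) (e i)) = cinner (e i) ((S ^^ n) (e i)) - g n i"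
      unfolding g_def by (simp add: cinner_diff2[OF basis_l2 Spow_l2[OF basis_l2] sal_l2[OF sal_A Spow_l2[OF basis_l2]]])
    thus ?thesis by simp
  qed
  have "(\<Sum>n<N. g n i) = (\<Sum>n<N. cinner (e i) ((S ^^ n) (e i)) - cinner (e i) ((S ^^ Suc n) (e i)))"
    by (simp add: step)
  also have "\<dots> = cinner (e i) ((S ^^ 0) (e i)) - cinner (e i) ((S ^^ N) (e i))"
    by (rule sum_lessThan_telescope')
  also have "cinner (e i) ((S ^^ 0) (e i)) = 1" by (simp add: cinner_basis_left) (simp add: basis_vec_def)
  finally show ?thesis .
qed

lemma g_even_diff: "g (m + m) i - g (Suc (m + m)) i = of_real (nrm2 (A ((S ^^ m) (e i))))"
proof -
  have "g (m + m) i - g (Suc (m + m)) i = cinner (A (e i)) ((S ^^ m) ((S ^^ m) (A (e i))))"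
    by (simp add: g_diff funpow_add)
  also have "\<dots> = cinner ((S ^^ m) (A (e i))) ((S ^^ m) (A (e i)))"
    by (rule sal_sa[OF sal_pow[OF salS] Ae_l2 Spow_l2[OF Ae_l2]])
  also have "(S ^^ m) (A (e i)) = A ((S ^^ m) (e i))"
    by (rule Sop_pow_comm[OF sal_A basis_l2, symmetric])
  finally show ?thesis using cinner_self[OF sal_l2[OF sal_A Spow_l2[OF basis_l2]]] by simp
qed

lemma g0: "g 0 i = M i i"
  by (simp add: g_def cinner_basis_left mat_op_basis)

end

context hs_tr
begin

lemma g_re: "g n i = of_real (Re (g n i))"
  using g_real[of n i] by (simp add: complex_eq_iff)

lemma fwd_lim:
  assumes P: "pos A"
  shows "(\<lambda>n. \<Sum>i. g n i) \<longlonglongrightarrow> 0"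
proof -
  have dec: "Re (g (Suc n) i) \<le> Re (g n i)" for n i using g_diff_nonneg[of n i] by simp
  have ev: "0 \<le> Re (g (m + m) i)" for m i
    using P Spow_l2[OF basis_l2, of m i] unfolding g_even pos_def by blast
  have nn: "0 \<le> Re (g n i)" for n i
  proof -
    have "n = n div 2 + n div 2 \<or> n = Suc (n div 2 + n div 2)" by presburger
    then obtain m where "n = m + m \<or> n = Suc (m + m)" by blast
    thus ?thesis
    proof
      assume "n = m + m" thus ?thesis using ev by simp
    next
      assume n: "n = Suc (m + m)"
      have "0 \<le> Re (g (Suc m + Suc m) i)" by (rule ev)
      also have "\<dots> = Re (g (Suc n) i)" using n by simp
      also have "\<dots> \<le> Re (g n i)" by (rule dec)
      finally show ?thesis .
    qed
  qed
  have le0: "Re (g n i) \<le> Re (M i i)" for n i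
  proof (induction n)
    case 0 thus ?case by (simp add: g0)
  next
    case (Suc n) thus ?case using dec[of n i] by simp
  qed
  have lim_i: "(\<lambda>n. g n i) \<longlonglongrightarrow> 0" for i
  proof -
    have "(\<Sum>n<N. Re (g n i)) \<le> 1" for N
    proof -
      have "(\<Sum>n<N. Re (g n i)) = Re (\<Sum>n<N. g n i)" by simp
      also have "\<dots> = 1 - Re (cinner (e i) ((S ^^ N) (e i)))" by (simp add: g_tele)
      also have "\<dots> \<le> 1" using pos_pow[OF salS posS, of N] basis_l2[of i] unfolding pos_def by auto
      finally show ?thesis .
    qed
    hence "summable (\<lambda>n. Re (g n i))" by (intro summableI_nonneg_bounded[where x=1] nn)
    hence "(\<lambda>n. Re (g n i)) \<longlonglongrightarrow> 0" by (rule summable_LIMSEQ_zero)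
    hence "(\<lambda>n. complex_of_real (Re (g n i))) \<longlonglongrightarrow> of_real 0" by (rule tendsto_of_real)
    thus ?thesis using g_re by simp
  qed
  have sM: "summable (\<lambda>k. Re (M k k))" using tr by (intro summable_Re sums_summable) 
  have "eventually (\<lambda>n. summable (\<lambda>k. norm (g n k))) sequentially \<and>
        summable (\<lambda>n. norm ((0::complex))) \<and>
        ((\<lambda>n. suminf (\<lambda>k. g n k)) \<longlongrightarrow> suminf (\<lambda>k. (0::complex))) sequentially"
  proof (rule tannerys_theorem[where a="\<lambda>k n. g n k" and M="\<lambda>k. Re (M k k)"])
    show "\<And>k. (\<lambda>n. g n k) \<longlonglongrightarrow> 0" by (rule lim_i)
    show "summable (\<lambda>k. Re (M k k))" by (rule sM)
    show "sequentially \<noteq> bot" by simp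
    show "\<forall>\<^sub>F (k, n) in at_top \<times>\<^sub>F sequentially. norm (g n k) \<le> Re (M k k)"
    proof (intro always_eventually allI)
      fix p :: "nat \<times> nat"
      obtain k n where p: "p = (k, n)" by (cases p)
      have "norm (g n k) = \<bar>Re (g n k)\<bar>" by (subst g_re) simp
      also have "\<dots> = Re (g n k)" using nn by simp
      also have "\<dots> \<le> Re (M k k)" by (rule le0)
      finally show "case p of (k, n) \<Rightarrow> norm (g n k) \<le> Re (M k k)" using p by simp
    qed
  qed
  thus ?thesis by simp
qed

lemma conv_pos:
  assumes L: "(\<lambda>n. \<Sum>i. g n i) \<longlonglongrightarrow> 0"
  shows "pos A"
proof -
  define F where "F n = (\<Sum>i. g n i)" for n
  have FL: "(\<lambda>n. Re (F n)) \<longlonglongrightarrow> 0" using tendsto_Re[OF L[folded F_def]] by simp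
  have Fd: "Re (F n) - Re (F (Suc n)) = (\<Sum>i. Re (g n i - g (Suc n) i))" for n
  proof -
    have "F n - F (Suc n) = (\<Sum>i. g n i - g (Suc n) i)"
      unfolding F_def by (rule suminf_diff[OF g_summable g_summable])
    hence "Re (F n - F (Suc n)) = Re (\<Sum>i. g n i - g (Suc n) i)" by (rule arg_cong)
    hence "Re (F n) - Re (F (Suc n)) = Re (\<Sum>i. g n i - g (Suc n) i)" by (simp only: minus_complex.sel)
    also have "\<dots> = (\<Sum>i. Re (g n i - g (Suc n) i))"
      by (rule Re_suminf[OF summable_diff[OF g_summable g_summable]])
    finally show ?thesis .
  qed
  have Fdec: "Re (F (Suc n)) \<le> Re (F n)" for n
  proof -
    have "0 \<le> (\<Sum>i. Re (g n i - g (Suc n) i))"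
      by (intro suminf_nonneg summable_Re summable_diff g_summable g_diff_nonneg)
    thus ?thesis using Fd[of n] by simp
  qed
  have dF: "decseq (\<lambda>n. Re (F n))" by (rule decseq_SucI) (rule Fdec)
  have Fnn: "0 \<le> Re (F n)" for n using decseq_ge[OF dF FL] .
  have "g 0 = (\<lambda>i. M i i)" by (rule ext) (rule g0)
  hence F0: "Re (F 0) = 1" unfolding F_def using tr by (simp add: sums_iff)
  have Fle: "Re (F n) \<le> 1" for n using decseqD[OF dF, of 0 n] F0 by simp
  have Dm: "summable (\<lambda>i. nrm2 (A ((S ^^ m) (e i)))) \<and> (\<Sum>i. nrm2 (A ((S ^^ m) (e i)))) \<le> 1" for m
  proof -
    have eq: "(\<lambda>i. g (m + m) i - g (Suc (m + m)) i) = (\<lambda>i. of_real (nrm2 (A ((S ^^ m) (e i)))))"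
      by (rule ext) (rule g_even_diff)
    have "summable (\<lambda>i. g (m + m) i - g (Suc (m + m)) i)" by (intro summable_diff g_summable)
    hence s: "summable (\<lambda>i. nrm2 (A ((S ^^ m) (e i))))" unfolding eq by simp
    have eq2: "(\<lambda>i. Re (g (m + m) i - g (Suc (m + m)) i)) = (\<lambda>i. nrm2 (A ((S ^^ m) (e i))))"
      by (rule ext) (simp only: g_even_diff Re_complex_of_real)
    have "(\<Sum>i. nrm2 (A ((S ^^ m) (e i)))) = (\<Sum>i. Re (g (m + m) i - g (Suc (m + m)) i))"
      by (simp only: eq2)
    also have "\<dots> = Re (F (m + m)) - Re (F (Suc (m + m)))" by (rule Fd[symmetric])
    also have "\<dots> \<le> 1" using Fle[of "m + m"] Fnn[of "Suc (m + m)"] by simp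
    finally show ?thesis using s by simp
  qed
  have Hb: "nrm2 (A ((S ^^ m) x)) \<le> nrm2 x" if x: "x \<in> l2" for m x
  proof -
    have "nrm2 (A ((S ^^ m) x)) \<le> (\<Sum>i. nrm2 (A ((S ^^ m) (e i)))) * nrm2 x"
      by (rule hs_bound[OF sal_H _ x]) (use Dm in blast)
    also have "\<dots> \<le> 1 * nrm2 x" using Dm[of m] nrm2_nonneg[OF x] by (intro mult_right_mono) auto
    finally show ?thesis by simp
  qed
  show ?thesis
    unfolding pos_def
  proof (rule ballI, rule ccontr)
    fix x assume x: "x \<in> l2" and neg: "\<not> 0 \<le> Re (cinner x (A x))"
    define d where "d j = nrm2 ((S ^^ j) x)" for j
    define c where "c k = cinner x ((S ^^ k) x)" for k
    have Sx: "(S ^^ k) x \<in> l2" for k by (rule Spow_l2[OF x])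
    have d0: "0 \<le> d j" for j unfolding d_def by (rule nrm2_nonneg[OF Sx])
    have cstep: "cmod (c k - c (Suc k)) \<le> d 0" for k
    proof -
      have "(S ^^ Suc k) x = (\<lambda>i. (S ^^ k) x i - A ((S ^^ k) x) i)" by (simp add: Sop_def)
      hence "c (Suc k) = c k - cinner x (A ((S ^^ k) x))"
        unfolding c_def by (simp add: cinner_diff2[OF x Sx sal_l2[OF sal_A Sx]])
      hence "cmod (c k - c (Suc k)) = cmod (cinner x (A ((S ^^ k) x)))" by simp
      also have "\<dots> \<le> sqrt (nrm2 x) * sqrt (nrm2 (A ((S ^^ k) x)))"
        by (rule cs[OF x sal_l2[OF sal_A Sx]])
      also have "\<dots> \<le> sqrt (nrm2 x) * sqrt (nrm2 x)"
        using Hb[OF x, of k] nrm2_nonneg[OF x] by (intro mult_left_mono) auto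
      also have "\<dots> = d 0" using nrm2_nonneg[OF x] by (simp add: d_def)
      finally show ?thesis .
    qed
    have ceven: "c (j + j) = of_real (d j)" for j
    proof -
      have "c (j + j) = cinner x ((S ^^ j) ((S ^^ j) x))" by (simp add: c_def funpow_add)
      also have "\<dots> = cinner ((S ^^ j) x) ((S ^^ j) x)" by (rule sal_sa[OF sal_pow[OF salS] x Sx])
      also have "\<dots> = of_real (d j)" unfolding d_def by (rule cinner_self[OF Sx])
      finally show ?thesis .
    qed
    have dstep: "d (Suc j) - d j \<le> 2 * d 0" for j
    proof -
      have "of_real (d j - d (Suc j)) = (c (j + j) - c (Suc (j + j))) + (c (Suc (j + j)) - c (Suc (Suc (j + j))))"
        using ceven[of j] ceven[of "Suc j"] by simp
      hence "\<bar>d j - d (Suc j)\<bar> \<le> cmod (c (j + j) - c (Suc (j + j))) + cmod (c (Suc (j + j)) - c (Suc (Suc (j + j))))"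
        by (metis norm_of_real norm_triangle_ineq)
      thus ?thesis using cstep[of "j + j"] cstep[of "Suc (j + j)"] by simp
    qed
    have d01: "0 < d 0 \<and> d 0 < d 1"
    proof -
      have "cinner x (S x) = cinner x x - cinner x (A x)"
        unfolding Sop_def by (rule cinner_diff2[OF x x sal_l2[OF sal_A x]])
      hence "Re (cinner x (S x)) = d 0 - Re (cinner x (A x))" by (simp add: cinner_self[OF x] d_def)
      hence gt: "d 0 < Re (cinner x (S x))" using neg by simp
      have "Re (cinner x (S x)) \<le> cmod (cinner x (S x))" by (rule complex_Re_le_cmod)
      also have "\<dots> \<le> sqrt (nrm2 x) * sqrt (nrm2 (S x))" by (rule cs[OF x sal_l2[OF salS x]])
      also have "\<dots> = sqrt (d 0) * sqrt (d 1)" by (simp add: d_def)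
      finally have lt: "d 0 < sqrt (d 0) * sqrt (d 1)" using gt by simp
      have p: "0 < d 0"
      proof (rule ccontr)
        assume "\<not> 0 < d 0" hence "d 0 = 0" using d0[of 0] by simp
        thus False using lt by simp
      qed
      have e0: "sqrt (d 0) * sqrt (d 0) = d 0" using d0[of 0] by simp
      have "sqrt (d 0) * sqrt (d 0) < sqrt (d 0) * sqrt (d 1)" using lt unfolding e0 .
      moreover have sp: "0 < sqrt (d 0)" using p by simp
      ultimately have "sqrt (d 0) < sqrt (d 1)" using mult_less_cancel_left_pos[OF sp] by blast
      hence "d 0 < d 1" by simp
      thus ?thesis using p by simp
    qed
    have logc: "(d (Suc j))^2 \<le> d j * d (Suc (Suc j))" for j
    proof -
      have "of_real (d (Suc j)) = cinner ((S ^^ Suc j) x) ((S ^^ Suc j) x)"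
        unfolding d_def by (rule cinner_self[OF Sx, symmetric])
      also have "\<dots> = cinner (S ((S ^^ j) x)) ((S ^^ Suc j) x)" by simp
      also have "\<dots> = cinner ((S ^^ j) x) (S ((S ^^ Suc j) x))" by (rule sal_sa[OF salS Sx Sx, symmetric])
      also have "\<dots> = cinner ((S ^^ j) x) ((S ^^ Suc (Suc j)) x)" by simp
      finally have "d (Suc j) = cmod (cinner ((S ^^ j) x) ((S ^^ Suc (Suc j)) x))"
        by (metis d0 norm_of_real abs_of_nonneg)
      also have "\<dots> \<le> sqrt (d j) * sqrt (d (Suc (Suc j)))" unfolding d_def by (rule cs[OF Sx Sx])
      finally have "d (Suc j) \<le> sqrt (d j) * sqrt (d (Suc (Suc j)))" .
      hence "(d (Suc j))^2 \<le> (sqrt (d j) * sqrt (d (Suc (Suc j))))^2"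
        using d0 by (intro power_mono) auto
      also have "\<dots> = d j * d (Suc (Suc j))" using d0 by (simp add: power_mult_distrib)
      finally show ?thesis .
    qed
    define r where "r = d 1 / d 0"
    have r1: "1 < r" using d01 by (simp add: r_def)
    have grow: "0 < d j \<and> r * d j \<le> d (Suc j)" for j
    proof (induction j)
      case 0 thus ?case using d01 by (simp add: r_def)
    next
      case (Suc j)
      hence pj: "0 < d j" and rj: "r * d j \<le> d (Suc j)" by auto
      have ps: "0 < d (Suc j)" using pj rj r1 by (smt (verit) mult_pos_pos)
      have "d j * (r * d (Suc j)) = d (Suc j) * (r * d j)" by simp
      also have "\<dots> \<le> d (Suc j) * d (Suc j)" using rj ps by (intro mult_left_mono) auto
      also have "\<dots> \<le> d j * d (Suc (Suc j))" using logc[of j] by (simp add: power2_eq_square)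
      finally have "r * d (Suc j) \<le> d (Suc (Suc j))" using pj by (simp add: mult_le_cancel_left)
      thus ?case using ps by simp
    qed
    have powb: "r ^ j * d 0 \<le> d j" for j
    proof (induction j)
      case 0 thus ?case by simp
    next
      case (Suc j)
      have "r ^ Suc j * d 0 = r * (r ^ j * d 0)" by simp
      also have "\<dots> \<le> r * d j" using Suc r1 by (intro mult_left_mono) auto
      also have "\<dots> \<le> d (Suc j)" using grow[of j] by simp
      finally show ?case .
    qed
    have bnd: "(r - 1) * r ^ j \<le> 2" for j
    proof -
      have "(r - 1) * (r ^ j * d 0) \<le> (r - 1) * d j" using powb[of j] r1 by (intro mult_left_mono) auto
      also have "\<dots> \<le> d (Suc j) - d j" using grow[of j] by (simp add: algebra_simps)
      also have "\<dots> \<le> 2 * d 0" by (rule dstep)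
      finally have "((r - 1) * r ^ j) * d 0 \<le> 2 * d 0" by (simp add: algebra_simps)
      thus ?thesis using d01 by simp
    qed
    obtain n where n: "2 / (r - 1) < r ^ n" using real_arch_pow[OF r1] by blast
    hence "2 < (r - 1) * r ^ n" using r1 by (simp add: field_simps)
    thus False using bnd[of n] by simp
  qed
qed

end

theorem theorem2p6:
  fixes M :: "nat \<Rightarrow> nat \<Rightarrow> complex"
  shows "represents_state M \<longleftrightarrow>
    ((\<lambda>(i, j). (cmod (M i j))^2) summable_on UNIV \<and>
       (\<Sum>\<^sub>\<infinity>(i, j)\<in>UNIV. (cmod (M i j))^2) \<le> 1) \<and>
    (\<forall>i j. M i j = cnj (M j i)) \<and>
    ((\<lambda>n. \<Sum>k\<le>n. (-1)^k * of_nat (n choose k) *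
        (\<Sum>i. cinner (basis_vec i) ((mat_op M ^^ (k + 1)) (basis_vec i))))
      \<longlonglongrightarrow> 0) \<and>
    ((\<lambda>i. M i i) sums 1)"
proof
  assume "represents_state M"
  then obtain T where DT: "density_operator T"
    and MT: "\<And>i j. cinner (basis_vec i) (T (basis_vec j)) = M i j"
    unfolding represents_state_def by blast
  interpret D: dens T using DT by (simp add: dens_def)
  have MM: "D.MM = M" by (intro ext) (simp add: D.MM_def MT)
  have hsM: "hs M" using D.hs_loc MM by simp
  have trM: "(\<lambda>i. M i i) sums 1" using D.T_tr MM by simp
  have posM: "pos (mat_op M)" using D.pos_mat MM by simp
  have htM: "hs_tr M" using hsM trM by (simp add: hs_tr_def hs_tr_axioms_def)
  interpret H: hs_tr M by (rule htM)
  have lim: "(\<lambda>n. \<Sum>i. H.g n i) \<longlonglongrightarrow> 0" by (rule H.fwd_lim[OF posM])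
  show "((\<lambda>(i, j). (cmod (M i j))^2) summable_on UNIV \<and>
       (\<Sum>\<^sub>\<infinity>(i, j)\<in>UNIV. (cmod (M i j))^2) \<le> 1) \<and>
    (\<forall>i j. M i j = cnj (M j i)) \<and>
    ((\<lambda>n. \<Sum>k\<le>n. (-1)^k * of_nat (n choose k) *
        (\<Sum>i. cinner (basis_vec i) ((mat_op M ^^ (k + 1)) (basis_vec i))))
      \<longlonglongrightarrow> 0) \<and>
    ((\<lambda>i. M i i) sums 1)"
  proof (intro conjI allI)
    have tr_eq: "(\<lambda>n. \<Sum>k\<le>n. (-1)^k * of_nat (n choose k) *
        (\<Sum>i. cinner (basis_vec i) ((mat_op M ^^ (k + 1)) (basis_vec i)))) = (\<lambda>n. \<Sum>i. H.g n i)"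
      by (rule ext) (rule H.trace_eq)
    show "(\<lambda>n. \<Sum>k\<le>n. (-1)^k * of_nat (n choose k) *
        (\<Sum>i. cinner (basis_vec i) ((mat_op M ^^ (k + 1)) (basis_vec i)))) \<longlonglongrightarrow> 0"
      unfolding tr_eq by (rule lim)
    show "(\<lambda>(i, j). (cmod (M i j))^2) summable_on UNIV" by (rule H.hs_sum)
    show "(\<Sum>\<^sub>\<infinity>(i, j)\<in>UNIV. (cmod (M i j))^2) \<le> 1" by (rule H.hs_le)
    show "M i j = cnj (M j i)" for i j by (rule H.herm)
    show "(\<lambda>i. M i i) sums 1" by (rule trM)
  qed
next
  assume R: "((\<lambda>(i, j). (cmod (M i j))^2) summable_on UNIV \<and>
       (\<Sum>\<^sub>\<infinity>(i, j)\<in>UNIV. (cmod (M i j))^2) \<le> 1) \<and>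
    (\<forall>i j. M i j = cnj (M j i)) \<and>
    ((\<lambda>n. \<Sum>k\<le>n. (-1)^k * of_nat (n choose k) *
        (\<Sum>i. cinner (basis_vec i) ((mat_op M ^^ (k + 1)) (basis_vec i))))
      \<longlonglongrightarrow> 0) \<and>
    ((\<lambda>i. M i i) sums 1)"
  have htM: "hs_tr M" unfolding hs_tr_def hs_tr_axioms_def hs_def using R by blast
  interpret H: hs_tr M by (rule htM)
  have tr_eq: "(\<lambda>n. \<Sum>k\<le>n. (-1)^k * of_nat (n choose k) *
        (\<Sum>i. cinner (basis_vec i) ((mat_op M ^^ (k + 1)) (basis_vec i)))) = (\<lambda>n. \<Sum>i. H.g n i)"
    by (rule ext) (rule H.trace_eq)
  have lim: "(\<lambda>n. \<Sum>i. H.g n i) \<longlonglongrightarrow> 0" using R unfolding tr_eq by blast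
  have P: "pos (mat_op M)" by (rule H.conv_pos[OF lim])
  have dg: "(\<lambda>i. cinner (basis_vec i) (mat_op M (basis_vec i))) = (\<lambda>i. M i i)"
    by (rule ext) (simp add: cinner_basis_left H.mat_op_basis)
  have "density_operator (mat_op M)"
    unfolding density_operator_def dg
  proof (intro conjI)
    show "(\<lambda>i. M i i) sums 1" using R by blast
  qed (use H.sal_A P in \<open>unfold sal_def pos_def, blast+\<close>)
  moreover have "\<forall>i j. cinner (basis_vec i) (mat_op M (basis_vec j)) = M i j"
    by (simp add: cinner_basis_left H.mat_op_basis)
  ultimately show "represents_state M" unfolding represents_state_def by blast
qed

end
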